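(* Let $n\ge 1$ and consider a radial distribution network whose matrices are $\mathbf{R}=\mathbf{M}^{-T}\mathbf{D}_r\mathbf{M}^{-1}$ and $\mathbf{X}=\mathbf{M}^{-T}\mathbf{D}_x\mathbf{M}^{-1}$, where $\mathbf{M}\in\mathbb{R}^{n\times n}$ is an invertible matrix determined by the network topology and $\mathbf{D}_r,\mathbf{D}_x$ are diagonal matrices with positive diagonal entries given by the resistances and reactances of the power lines (so $\mathbf{R},\mathbf{X}$ are positive definite). Suppose the ratio of resistance to reactance of every power line equals the same constant $\rho>0$. Let $v_0\in\mathbb{R}$ be fixed, $\mathbf{1}\in\mathbb{R}^n$ the all-ones vector, $\mathbf{v}^{ref}\in\mathbb{R}^n$ fixed, and consider the dynamics in which $\mathbf{v}_t=\mathbf{R}\mathbf{p}_t+\mathbf{X}\mathbf{q}_t+v_0\mathbf{1}$, $\tilde{\mathbf{v}}_t=\mathbf{v}_t-\mathbf{v}^{ref}$, and for each node $i$ and $t\ge1$, $$p_{i,t}=p_{i,t-1}-k_i^p\,\tilde v_{i,t-1},\qquad q_{i,t}=q_{i,t-1}-k_i^q\,\tilde v_{i,t-1},$$ so that $\tilde{\mathbf{v}}_t=(\mathbf{I}-\mathbf{R}\mathbf{K}^p-\mathbf{X}\mathbf{K}^q)\tilde{\mathbf{v}}_{t-1}$, where $\mathbf{K}^p=\mathrm{diag}(k_1^p,\dots,k_n^p)$ and $\mathbf{K}^q=\mathrm{diag}(k_1^q,\dots,k_n^q)$. If $$0\prec \rho\mathbf{K}^p+\mathbf{K}^q\prec 2\mathbf{X}^{-1}$$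 (in the positive definite ordering), then the equilibrium $\tilde{\mathbf{v}}=0$ of this dynamical system is locally exponentially stable.
   Context: This models the internal power distribution network of a data center under the Linear DistFlow approximation: $p_i,q_i$ are active and reactive power injections at node $i$, $v_i$ the node voltage, $v_0$ the root voltage at the point of connection to the transmission grid. The notation $\mathbf{A}\prec\mathbf{B}$ means $\mathbf{B}-\mathbf{A}$ is positive definite. *)

theory Defs
  imports "HOL-Analysis.Analysis"
begin

definition diag_mat :: "real ^ 'n \<Rightarrow> real ^ 'n ^ 'n" where
  "diag_mat d = (\<chi> i j. if i = j then d $ i else 0)"

definition pos_def :: "real ^ 'n ^ 'n \<Rightarrow> bool" where
  "pos_def A \<longleftrightarrow> transpose A = A \<and> (\<forall>x. x \<noteq> 0 \<longrightarrow> x \<bullet> (A *v x) > 0)"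

definition pd_less :: "real ^ 'n ^ 'n \<Rightarrow> real ^ 'n ^ 'n \<Rightarrow> bool" where
  "pd_less A B \<longleftrightarrow> pos_def (B - A)"

definition loc_exp_stable :: "(nat \<Rightarrow> real ^ 'n) set \<Rightarrow> bool" where
  "loc_exp_stable traj \<longleftrightarrow>
     (\<exists>\<delta>>0. \<exists>C>0. \<exists>r. 0 \<le> r \<and> r < 1 \<and>
        (\<forall>x\<in>traj. norm (x 0) < \<delta> \<longrightarrow> (\<forall>t. norm (x t) \<le> C * r ^ t * norm (x 0))))"

definition vdev_traj ::
  "real ^ 'n ^ 'n \<Rightarrow> real ^ 'n ^ 'n \<Rightarrow> real \<Rightarrow> real ^ 'n \<Rightarrow> real ^ 'n \<Rightarrow> real ^ 'n
     \<Rightarrow> (nat \<Rightarrow> real ^ 'n) set" where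
  "vdev_traj R X v0 vref kp kq =
     {vt. \<exists>p q. (\<forall>t. vt t = (R *v p t + X *v q t + v0 *\<^sub>R (\<chi> i. 1)) - vref) \<and>
               (\<forall>t i. p (Suc t) $ i = p t $ i - kp $ i * vt t $ i) \<and>
               (\<forall>t i. q (Suc t) $ i = q t $ i - kq $ i * vt t $ i)}"

end

theory Submission
  imports Defs
begin

lemma diag_mult: "diag_mat d *v v = (\<chi> i. d$i * v$i)"
proof -
  have "(\<Sum>j\<in>UNIV. (if i = j then d $ i else 0) * v $ j) = d$i * v$i" for i
  proof -
    have "(\<Sum>j\<in>UNIV. (if i = j then d $ i else 0) * v $ j) = (\<Sum>j\<in>UNIV. if i = j then d $ i * v$j else 0)"
      by (rule sum.cong) auto
    also have "... = d$i * v$i" by simp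
    finally show ?thesis .
  qed
  then show ?thesis by (simp add: diag_mat_def matrix_vector_mult_def vec_eq_iff)
qed

lemma diag_mat_mult: "diag_mat a ** diag_mat b = diag_mat (\<chi> i. a$i * b$i)"
proof -
  have "(\<Sum>k\<in>UNIV. (if i = k then a $ i else 0) * (if k = j then b $ k else 0)) = (if i = j then a$i * b$i else 0)" for i j
  proof -
    have "(\<Sum>k\<in>UNIV. (if i = k then a $ i else 0) * (if k = j then b $ k else 0)) = (\<Sum>k\<in>UNIV. if i = k then (if i = j then a$i * b$i else 0) else 0)"
      by (rule sum.cong) auto
    also have "... = (if i = j then a$i * b$i else 0)" by simp
    finally show ?thesis .
  qed
  then show ?thesis by (simp add: diag_mat_def matrix_matrix_mult_def vec_eq_iff)
qed

lemma diag_invertible: assumes "\<forall>i. d$i \<noteq> 0" shows "invertible (diag_mat d)"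
proof -
  have "diag_mat d ** diag_mat (\<chi> i. 1 / d$i) = mat 1"
    unfolding diag_mat_mult using assms by (simp add: diag_mat_def mat_def vec_eq_iff)
  moreover have "diag_mat (\<chi> i. 1 / d$i) ** diag_mat d = mat 1"
    unfolding diag_mat_mult using assms by (simp add: diag_mat_def mat_def vec_eq_iff)
  ultimately show ?thesis unfolding invertible_def by blast
qed

lemma matrix_inv_props: fixes A :: "real^'n^'n" assumes "invertible A"
  shows "A ** matrix_inv A = mat 1" "matrix_inv A ** A = mat 1"
  using someI_ex[OF assms[unfolded invertible_def]] unfolding matrix_inv_def by auto

lemma matrix_inv_invertible: fixes A :: "real^'n^'n" assumes "invertible A"
  shows "invertible (matrix_inv A)"
  using matrix_inv_props[OF assms] unfolding invertible_def by blast

lemma quad_cont: fixes P :: "real^'n^'n" shows "continuous_on UNIV (\<lambda>x::real^'n. x \<bullet> (P *v x))"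
  by (intro continuous_intros continuous_on_id matrix_vector_mult_linear_continuous_on)

lemma quad_scale: fixes P :: "real^'n^'n" shows "(c *\<^sub>R x) \<bullet> (P *v (c *\<^sub>R x)) = c^2 * (x \<bullet> (P *v x))"
  by (simp only: matrix_vector_mult_scaleR inner_scaleR_left inner_scaleR_right) (simp add: power2_eq_square)

lemma quad_bounds:
  fixes P :: "real^'n^'n"
  assumes "\<forall>x. x \<noteq> 0 \<longrightarrow> x \<bullet> (P *v x) > 0"
  shows "\<exists>a>0. \<exists>b>0. \<forall>x. a * norm x ^ 2 \<le> x \<bullet> (P *v x) \<and> x \<bullet> (P *v x) \<le> b * norm x ^ 2"
proof -
  let ?f = "\<lambda>x::real^'n. x \<bullet> (P *v x)"
  have cpt: "compact (sphere (0::real^'n) 1)" by simp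
  obtain i :: 'n where True by simp
  have ne: "sphere (0::real^'n) 1 \<noteq> {}"
    by (metis dist_0_norm mem_sphere norm_axis_1 empty_iff)
  have co: "continuous_on (sphere 0 1) ?f"
    using quad_cont continuous_on_subset by blast
  obtain u where u: "u \<in> sphere 0 1" "\<forall>y\<in>sphere 0 1. ?f u \<le> ?f y"
    using continuous_attains_inf[OF cpt ne co] by blast
  obtain w where w: "w \<in> sphere 0 1" "\<forall>y\<in>sphere 0 1. ?f y \<le> ?f w"
    using continuous_attains_sup[OF cpt ne co] by blast
  have "u \<noteq> 0" using u by auto
  then have a: "?f u > 0" using assms by auto
  have b: "?f w > 0" using a u w by force
  have "?f u * norm x ^ 2 \<le> ?f x \<and> ?f x \<le> ?f w * norm x ^ 2" for x
  proof (cases "x = 0")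
    case True then show ?thesis by simp
  next
    case False
    define y where "y = (1 / norm x) *\<^sub>R x"
    have y: "y \<in> sphere 0 1" using False by (simp add: y_def)
    have x: "x = norm x *\<^sub>R y" using False by (simp add: y_def)
    have fx: "?f x = norm x ^ 2 * ?f y" by (metis x quad_scale)
    have "?f u \<le> ?f y" "?f y \<le> ?f w" using u w y by auto
    then show ?thesis unfolding fx
      by (simp add: mult_right_mono mult.commute)
  qed
  then show ?thesis using a b by blast
qed

theorem theorem4p2:
  fixes M :: "real ^ 'n ^ 'n" and dr dx kp kq vref :: "real ^ 'n"
    and \<rho> v0 :: real and R X :: "real ^ 'n ^ 'n"
  assumes "invertible M"
    and "\<forall>i. dr $ i > 0" and "\<forall>i. dx $ i > 0"
    and "R = transpose (matrix_inv M) ** diag_mat dr ** matrix_inv M"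
    and "X = transpose (matrix_inv M) ** diag_mat dx ** matrix_inv M"
    and "\<rho> > 0" and "\<forall>i. dr $ i / dx $ i = \<rho>"
    and "pd_less 0 (\<rho> *\<^sub>R diag_mat kp + diag_mat kq)"
    and "pd_less (\<rho> *\<^sub>R diag_mat kp + diag_mat kq) (2 *\<^sub>R matrix_inv X)"
  shows "loc_exp_stable (vdev_traj R X v0 vref kp kq)"
proof -
  define k where "k = \<rho> *\<^sub>R kp + kq"
  define K where "K = diag_mat k"
  have KK: "\<rho> *\<^sub>R diag_mat kp + diag_mat kq = K"
    by (simp add: K_def k_def diag_mat_def vec_eq_iff)
  have Kv: "K *v x = \<rho> *\<^sub>R (diag_mat kp *v x) + diag_mat kq *v x" for x
    by (simp add: K_def k_def diag_mult vec_eq_iff algebra_simps)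
  have Kpos: "\<forall>x. x \<noteq> 0 \<longrightarrow> x \<bullet> (K *v x) > 0"
    using assms(8) unfolding KK pd_less_def pos_def_def by simp
  have kpos: "k$i > 0" for i
  proof -
    have "axis i 1 \<bullet> (K *v axis i (1::real)) > 0" using Kpos by (simp add: axis_eq_0_iff)
    moreover have "(\<chi> j. k$j * axis i (1::real) $ j) = axis i (k$i)" by (simp add: vec_eq_iff axis_def)
    then have "axis i 1 \<bullet> (K *v axis i (1::real)) = k$i" by (simp add: K_def diag_mult inner_axis_axis)
    ultimately show ?thesis by simp
  qed
  define Mi where "Mi = matrix_inv M"
  have Mi: "invertible Mi" using matrix_inv_invertible assms(1) Mi_def by blast
  have dx0: "\<forall>i. dx$i \<noteq> 0" using assms(3) by (metis less_irrefl)
  have Xinv: "invertible X" unfolding assms(5) Mi_def[symmetric]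
    by (intro invertible_mult transpose_invertible Mi diag_invertible dx0)
  define Xi where "Xi = matrix_inv X"
  have XiX: "Xi ** X = mat 1" using matrix_inv_props[OF Xinv] Xi_def by simp
  have RX: "R *v y = \<rho> *\<^sub>R (X *v y)" for y
  proof -
    have dr: "dr$i = \<rho> * dx$i" for i
      using assms(7)[rule_format, of i] assms(3)[rule_format, of i] by (simp add: divide_eq_eq)
    have D: "diag_mat dr *v z = \<rho> *\<^sub>R (diag_mat dx *v z)" for z
      by (simp add: diag_mult vec_eq_iff dr)
    show ?thesis unfolding assms(4,5)
      by (simp add: matrix_vector_mul_assoc[symmetric] D matrix_vector_mult_scaleR)
  qed
  have step: "vt (Suc t) = vt t - X *v (K *v vt t)" if vtin: "vt \<in> vdev_traj R X v0 vref kp kq" for vt t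
  proof -
    obtain p q where h: "\<forall>t. vt t = (R *v p t + X *v q t + v0 *\<^sub>R (\<chi> i. 1)) - vref"
        "\<forall>t i. p (Suc t) $ i = p t $ i - kp $ i * vt t $ i"
        "\<forall>t i. q (Suc t) $ i = q t $ i - kq $ i * vt t $ i"
      using vtin unfolding vdev_traj_def by blast
    have dp: "p (Suc t) - p t = - (diag_mat kp *v vt t)" using h(2) by (simp add: vec_eq_iff diag_mult)
    have dq: "q (Suc t) - q t = - (diag_mat kq *v vt t)" using h(3) by (simp add: vec_eq_iff diag_mult)
    have neg: "A *v (- y) = - (A *v y)" for A :: "real^'n^'n" and y
      using matrix_vector_mult_diff_distrib[of A 0 y] by simp
    have "vt (Suc t) - vt t = R *v (p (Suc t) - p t) + X *v (q (Suc t) - q t)"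
      unfolding h(1)[rule_format, of t] h(1)[rule_format, of "Suc t"]
      by (simp add: matrix_vector_mult_diff_distrib algebra_simps)
    also have "\<dots> = - (X *v (K *v vt t))"
      unfolding dp dq RX Kv
      by (simp add: neg matrix_vector_right_distrib matrix_vector_mult_scaleR algebra_simps)
    finally show ?thesis by (simp add: algebra_simps)
  qed
  define V where "V x = x \<bullet> (K *v x)" for x
  have Ksym: "x \<bullet> (K *v y) = y \<bullet> (K *v x)" for x y
    by (simp add: K_def diag_mult inner_vec_def ac_simps)
  define G where "G = 2 *\<^sub>R Xi - K"
  have lyap: "V (x - X *v (K *v x)) = V x - (X *v (K *v x)) \<bullet> (G *v (X *v (K *v x)))" for x
  proof -
    define w where "w = X *v (K *v x)"
    have a: "Xi *v w = K *v x" unfolding w_def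
      using matrix_vector_mul_assoc[of Xi X "K *v x"] XiX by simp
    have b: "G *v w = 2 *\<^sub>R (Xi *v w) - K *v w"
      by (simp add: G_def matrix_vector_mult_diff_rdistrib scaleR_matrix_vector_assoc)
    have c: "x \<bullet> (K *v w) = w \<bullet> (K *v x)" by (rule Ksym)
    show ?thesis unfolding w_def[symmetric] b a V_def
      by (simp add: matrix_vector_mult_diff_distrib inner_diff_left inner_diff_right c inner_commute)
  qed
  define W where "W = X ** K"
  define P where "P = transpose W ** G ** W"
  have Qeq: "x \<bullet> (P *v x) = (X *v (K *v x)) \<bullet> (G *v (X *v (K *v x)))" for x
  proof -
    have "x \<bullet> (P *v x) = x \<bullet> (transpose W *v (G *v (W *v x)))"
      by (simp only: P_def matrix_vector_mul_assoc[symmetric])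
    also have "\<dots> = (W *v x) \<bullet> (G *v (W *v x))"
      by (metis dot_lmul_matrix vector_transpose_matrix)
    finally show ?thesis by (simp only: W_def matrix_vector_mul_assoc[symmetric])
  qed
  have Gpos: "\<forall>y. y \<noteq> 0 \<longrightarrow> y \<bullet> (G *v y) > 0"
    using assms(9) unfolding KK pd_less_def pos_def_def G_def Xi_def by simp
  have Ppos: "\<forall>x. x \<noteq> 0 \<longrightarrow> x \<bullet> (P *v x) > 0"
  proof (intro allI impI)
    fix x :: "real^'n" assume x: "x \<noteq> 0"
    have "K *v x \<noteq> 0"
    proof
      assume "K *v x = 0"
      then have "\<forall>i. k$i * x$i = 0" by (simp add: K_def diag_mult vec_eq_iff)
      then have "x = 0" using kpos by (simp add: vec_eq_iff) (metis less_irrefl)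
      with x show False by simp
    qed
    moreover have "y = Xi *v (X *v y)" for y
      using matrix_vector_mul_assoc[of Xi X y] XiX by simp
    ultimately have "X *v (K *v x) \<noteq> 0" by (metis matrix_vector_mult_0_right)
    then show "x \<bullet> (P *v x) > 0" using Gpos Qeq by simp
  qed
  obtain a1 b1 :: real where ab1: "a1 > 0" "b1 > 0" "\<forall>x. a1 * norm x ^ 2 \<le> V x \<and> V x \<le> b1 * norm x ^ 2"
    using quad_bounds[OF Kpos] unfolding V_def by blast
  obtain a2 b2 :: real where ab2: "a2 > 0" "b2 > 0" "\<forall>x. a2 * norm x ^ 2 \<le> x \<bullet> (P *v x) \<and> x \<bullet> (P *v x) \<le> b2 * norm x ^ 2"
    using quad_bounds[OF Ppos] by blast
  define c where "c = max (1/2) (1 - a2 / b1)"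
  have c: "0 < c" "c < 1" using ab1 ab2 by (auto simp: c_def)
  have dec: "V (x - X *v (K *v x)) \<le> c * V x" for x
  proof -
    have "V (x - X *v (K *v x)) \<le> V x - a2 * norm x ^ 2"
      using lyap[of x] ab2(3)[rule_format, of x] Qeq[of x] by linarith
    also have "\<dots> \<le> V x - (a2 / b1) * V x"
    proof -
      have "(a2 / b1) * V x \<le> (a2 / b1) * (b1 * norm x ^ 2)"
        using ab1 ab2 by (intro mult_left_mono) auto
      then show ?thesis using ab1 by simp
    qed
    also have "\<dots> \<le> c * V x"
    proof -
      have "0 \<le> V x" using ab1(1) ab1(3)[rule_format, of x]
        by (smt (verit) zero_le_power2 mult_nonneg_nonneg)
      then have "(1 - a2/b1) * V x \<le> c * V x" by (intro mult_right_mono) (auto simp: c_def)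
      then show ?thesis by (simp add: algebra_simps)
    qed
    finally show ?thesis .
  qed
  show ?thesis unfolding loc_exp_stable_def
  proof (intro exI conjI ballI impI allI)
    show "(1::real) > 0" by simp
    show "sqrt (b1 / a1) > 0" using ab1 by simp
    show "0 \<le> sqrt c" "sqrt c < 1" using c by auto
    fix vt t assume vt: "vt \<in> vdev_traj R X v0 vref kp kq"
    have Vt: "V (vt t) \<le> c ^ t * V (vt 0)" for t
    proof (induction t)
      case 0 then show ?case by simp
    next
      case (Suc t)
      have "V (vt (Suc t)) \<le> c * V (vt t)" using step[OF vt, of t] dec by simp
      also have "\<dots> \<le> c * (c ^ t * V (vt 0))" using Suc c by (intro mult_left_mono) auto
      finally show ?case by simp
    qed
    have H: "a1 * norm (vt t) ^ 2 \<le> c ^ t * (b1 * norm (vt 0) ^ 2)"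
      using ab1(3) Vt[of t] c
      by (meson order_trans mult_left_mono zero_le_power less_imp_le)
    have "norm (vt t) ^ 2 \<le> (sqrt (b1 / a1) * sqrt c ^ t * norm (vt 0)) ^ 2"
    proof -
      have sc: "(sqrt c ^ t)^2 = c ^ t"
        using c by (metis less_imp_le power_mult mult.commute real_sqrt_pow2)
      have sa: "(sqrt (b1 / a1))^2 = b1 / a1" using ab1 by simp
      have "(sqrt (b1 / a1) * sqrt c ^ t * norm (vt 0)) ^ 2 = b1 / a1 * c ^ t * norm (vt 0) ^ 2"
        by (simp only: power_mult_distrib sc sa)
      moreover have "norm (vt t) ^ 2 \<le> b1 / a1 * c ^ t * norm (vt 0) ^ 2"
        using H ab1(1) by (simp add: field_simps)
      ultimately show ?thesis by simp
    qed
    then show "norm (vt t) \<le> sqrt (b1 / a1) * sqrt c ^ t * norm (vt 0)"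
      by (rule power2_le_imp_le) (use ab1 c in auto)
  qed
qed

end
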